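(* Let $r\ge2$ be an integer. The following four families span the same (finite-dimensional) linear space of functions on $\mathcal G_H$: (1) $\psi^{0,H}_{r-2p,-p}$ for $1\le p\le\lfloor r/2\rfloor$; (2) $I_{r-2p,2p}$ for $1\le p\le\lfloor r/2\rfloor$; (3) $\xi^{2p}w^{r-2p}$ for $1\le p\le\lfloor r/2\rfloor$; (4) $\xi^2w^{r-2p}(w^2-4\xi^2)^{p-1}$ for $1\le p\le\lfloor r/2\rfloor$.
   Context: $\mathcal G_H=\mathbb R/2\pi\mathbb Z\times\mathbb R$ parametrizes unit-speed geodesics of the Poincaré disk ($\{|z|<1\}$, metric $4|dz|^2/(1-|z|^2)^2$) by $z_{\beta,a}(t)=e^{i\beta}\frac{(2+ia)\tanh(t/2)+ia}{ia\tanh(t/2)-2+ia}$. $I_{p,q}(\beta,a)=\int_{\mathbb R}z_{\beta,a}(t)^p\dot z_{\beta,a}(t)^qdt$. With $\omega=\beta+\tan^{-1}a+\pi/2$ and $\mu_H=(1+a^2)^{-1/2}$: $w=-a\mu_He^{i\omega}$, $\xi=\frac i2\mu_He^{i\omega}$. For $n\in\mathbb N_0$, $k\in\mathbb Z$, $\psi^{0,H}_{n,k}(\beta,a)=\mu_H^2e^{i(n-2k)\omega}p_n\!\big(a/\sqrt{1+a^2}\big)$, where $p_n$ is the multiple of the Jacobi polynomial $P_n^{(1/2,1/2)}$ (equivalently of the Chebyshev polynomial $U_n$) normalized by $\int_{-1}^1p_n(t)^2(1-t^2)^{1/2}dt=(2\pi)^{-1}$. *)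

theory Defs
  imports "HOL-Analysis.Analysis"
begin

text \<open>Geodesics of the Poincare disk, parametrized by (beta, a) in R x R
  (beta is understood modulo 2 pi; all functions below are 2pi-periodic in beta).\<close>

definition zH :: "real \<Rightarrow> real \<Rightarrow> real \<Rightarrow> complex" where
  "zH \<beta> a t = cis \<beta> *
     (((2 + \<i> * of_real a) * of_real (tanh (t/2)) + \<i> * of_real a) /
      (\<i> * of_real a * of_real (tanh (t/2)) - 2 + \<i> * of_real a))"

definition zH_dot :: "real \<Rightarrow> real \<Rightarrow> real \<Rightarrow> complex" where
  "zH_dot \<beta> a t = vector_derivative (zH \<beta> a) (at t)"

definition I_H :: "nat \<Rightarrow> nat \<Rightarrow> real \<times> real \<Rightarrow> complex" where
  "I_H p q = (\<lambda>(\<beta>, a). integral UNIV (\<lambda>t. zH \<beta> a t ^ p * zH_dot \<beta> a t ^ q))"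

definition omegaH :: "real \<Rightarrow> real \<Rightarrow> real" where
  "omegaH \<beta> a = \<beta> + arctan a + pi / 2"

definition muH :: "real \<Rightarrow> real" where
  "muH a = 1 / sqrt (1 + a\<^sup>2)"

definition wH :: "real \<times> real \<Rightarrow> complex" where
  "wH = (\<lambda>(\<beta>, a). - of_real (a * muH a) * cis (omegaH \<beta> a))"

definition xiH :: "real \<times> real \<Rightarrow> complex" where
  "xiH = (\<lambda>(\<beta>, a). (\<i> / 2) * of_real (muH a) * cis (omegaH \<beta> a))"

fun chebU :: "nat \<Rightarrow> real \<Rightarrow> real" where
  "chebU 0 t = 1"
| "chebU (Suc 0) t = 2 * t"
| "chebU (Suc (Suc n)) t = 2 * t * chebU (Suc n) t - chebU n t"

text \<open>p_n: the multiple of U_n with integral_{-1}^1 p_n^2 (1-t^2)^{1/2} dt = 1/(2 pi).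
  Since integral_{-1}^1 U_n^2 (1-t^2)^{1/2} dt = pi/2, this is p_n = U_n / pi
  (positive multiple chosen).\<close>
definition pH :: "nat \<Rightarrow> real \<Rightarrow> real" where
  "pH n t = chebU n t / pi"

definition psiH :: "nat \<Rightarrow> int \<Rightarrow> real \<times> real \<Rightarrow> complex" where
  "psiH n k = (\<lambda>(\<beta>, a). of_real ((muH a)\<^sup>2) * cis ((of_nat n - 2 * of_int k) * omegaH \<beta> a)
                * of_real (pH n (a / sqrt (1 + a\<^sup>2))))"

definition fam_span :: "(nat \<Rightarrow> 'a \<Rightarrow> complex) \<Rightarrow> nat set \<Rightarrow> ('a \<Rightarrow> complex) set" where
  "fam_span g P = {f. \<exists>c :: nat \<Rightarrow> complex. f = (\<lambda>x. \<Sum>p\<in>P. c p * g p x)}"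

end

theory Submission imports Defs "HOL-Complex_Analysis.Complex_Analysis" "HOL-Real_Asymp.Real_Asymp" begin

lemma cis_arctan: "cis (arctan a) = (1 + \<i> * of_real a) / of_real (sqrt (1 + a\<^sup>2))"
  by (simp add: complex_eq_iff cos_arctan sin_arctan)

lemma onemia_nz: "1 - \<i> * of_real a \<noteq> 0"
  by (simp add: complex_eq_iff)

lemma cis_omega: "cis (omegaH \<beta> a) = cis \<beta> * \<i> * (1 + \<i> * of_real a) / of_real (sqrt (1 + a\<^sup>2))"
proof -
  have "cis (omegaH \<beta> a) = cis \<beta> * cis (arctan a) * cis (pi/2)"
    unfolding omegaH_def by (simp only: cis_mult)
  then show ?thesis by (simp add: cis_arctan)
qed

lemma sqrt_stuff: "(of_real (sqrt (1 + a\<^sup>2)))^2 = (1 + \<i> * of_real a) * (1 - \<i> * of_real a)"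
proof -
  have "(of_real (sqrt (1 + a\<^sup>2)) :: complex)^2 = of_real (1 + a^2)"
    by (simp only: of_real_power[symmetric]) simp
  then show ?thesis by (simp add: algebra_simps power2_eq_square)
qed

lemma sqrt_nz: "of_real (sqrt (1 + a\<^sup>2)) \<noteq> (0::complex)"
  by (smt (verit) of_real_eq_0_iff real_sqrt_gt_zero zero_le_power2)

lemma opa_nz: "1 + of_real a * of_real a \<noteq> (0::complex)"
proof -
  have "1 + of_real a * of_real a = (of_real (1 + a*a) :: complex)" by simp
  moreover have "1 + a*a > 0" by (simp add: add_pos_nonneg)
  ultimately show ?thesis by (metis of_real_eq_0_iff less_irrefl)
qed

lemma wH_eq: "wH (\<beta>, a) = - cis \<beta> * \<i> * of_real a / (1 - \<i> * of_real a)"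
  unfolding wH_def muH_def cis_omega
  using sqrt_nz[of a] onemia_nz[of a] sqrt_stuff[of a] opa_nz[of a]
  by (simp add: field_simps power2_eq_square)

lemma xiH_eq: "xiH (\<beta>, a) = - cis \<beta> / (2 * (1 - \<i> * of_real a))"
proof -
  have o2: "2 + of_real a * (of_real a * 2) \<noteq> (0::complex)"
  proof -
    have "2 + of_real a * (of_real a * 2) = 2 * (1 + of_real a * of_real a :: complex)" by (simp add: algebra_simps)
    then show ?thesis using opa_nz[of a] by (metis mult_eq_0_iff zero_neq_numeral)
  qed
  show ?thesis
  unfolding xiH_def muH_def cis_omega
  using sqrt_nz[of a] onemia_nz[of a] sqrt_stuff[of a] opa_nz[of a]
  by (simp add: field_simps power2_eq_square) (simp add: divide_eq_eq o2 algebra_simps)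
qed
definition Sm :: "real \<Rightarrow> complex \<Rightarrow> complex" where
  "Sm a \<tau> = ((\<i> * of_real a - 2) * \<tau> + \<i> * of_real a) / (\<i> * of_real a * \<tau> + \<i> * of_real a - 2)"

lemma D_nz: "\<i> * of_real a * of_real x + \<i> * of_real a - 2 \<noteq> (0::complex)"
  by (simp add: complex_eq_iff)

lemma mob: fixes A x c :: complex assumes d: "A*x + A - 2 \<noteq> 0" and o: "1 - A \<noteq> 0"
  shows "c * (((2 + A)*x + A)/(A*x - 2 + A)) = -c*A/(1-A) + 2*(-c/(2*(1-A))) * (((A-2)*x + A)/(A*x + A - 2))"
proof -
  define E where "E = A*x + A - 2"
  have d': "A*x - 2 + A = E" unfolding E_def by simp
  have E: "E \<noteq> 0" using d unfolding E_def .
  have oE: "(1-A)*E \<noteq> 0" using E o by simp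
  have 1: "-c*A/(1-A) = -c*A*E/((1-A)*E)" using E by simp
  have 2: "2*(-c/(2*(1-A))) * (((A-2)*x + A)/E) = -c*((A-2)*x + A)/((1-A)*E)"
  proof -
    have h: "2*(-c/(2*(1-A))) = -c/(1-A)" by (metis mult_divide_mult_cancel_left_if times_divide_eq_right zero_neq_numeral)
    show ?thesis unfolding h by (simp only: times_divide_times_eq)
  qed
  have 3: "-c*A*E/((1-A)*E) + -c*((A-2)*x + A)/((1-A)*E) = (-c*A*E + -c*((A-2)*x + A))/((1-A)*E)"
    by (rule add_divide_distrib[symmetric])
  have 4: "-c*A*E + -c*((A-2)*x + A) = c * ((2 + A)*x + A) * (1-A)"
    unfolding E_def by (simp add: algebra_simps)
  have 5: "c * ((2 + A)*x + A) * (1-A) / ((1-A)*E) = c * (((2 + A)*x + A)/E)"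
    using o by simp
  show ?thesis unfolding d' E_def[symmetric] 1 2 3 4 5 ..
qed

lemma zH_eq: "zH \<beta> a t = wH (\<beta>, a) + 2 * xiH (\<beta>, a) * Sm a (of_real (tanh (t/2)))"
  unfolding zH_def wH_eq xiH_eq Sm_def
  using mob[OF D_nz[of a "tanh (t/2)"] onemia_nz[of a], of "cis \<beta>"]
  by (simp add: mult.assoc)
lemma Sm_deriv:
  assumes d: "\<i> * of_real a * \<tau> + \<i> * of_real a - 2 \<noteq> 0"
  shows "(Sm a has_field_derivative (4*(1 - \<i> * of_real a)/(\<i> * of_real a * \<tau> + \<i> * of_real a - 2)^2)) (at \<tau>)"
proof -
  define A where "A = \<i> * complex_of_real a"
  have d': "A * \<tau> + A - 2 \<noteq> 0" using d unfolding A_def .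
  have 1: "((\<lambda>x. (A - 2) * x + A) has_field_derivative (A - 2)) (at \<tau>)"
    by (rule derivative_eq_intros refl | simp)+
  have 2: "((\<lambda>x. A * x + A - 2) has_field_derivative A) (at \<tau>)"
    by (rule derivative_eq_intros refl | simp)+
  have 3: "((\<lambda>x. ((A - 2) * x + A) / (A * x + A - 2)) has_field_derivative
     ((A-2) * (A * \<tau> + A - 2) - ((A - 2) * \<tau> + A) * A) / ((A * \<tau> + A - 2) * (A * \<tau> + A - 2))) (at \<tau>)"
    by (rule DERIV_divide[OF 1 2 d'])
  have 4: "(A-2) * (A * \<tau> + A - 2) - ((A - 2) * \<tau> + A) * A = 4 * (1 - A)"
    by (simp add: algebra_simps)
  show ?thesis using 3 unfolding 4 Sm_def A_def[symmetric] by (simp add: power2_eq_square)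
qed

lemma mob2: fixes A x :: complex assumes d: "A*x + A - 2 \<noteq> 0"
  shows "(1 - x^2)/2 * (4*(1-A)/(A*x + A - 2)^2) = (1 - (((A-2)*x + A)/(A*x + A - 2))^2)/2"
proof -
  define E where "E = A*x + A - 2"
  have E: "E \<noteq> 0" using d unfolding E_def .
  have "1 - (((A-2)*x + A)/E)^2 = (E^2 - ((A-2)*x + A)^2)/E^2"
    using E by (simp add: field_simps)
  also have "E^2 - ((A-2)*x + A)^2 = 4*(1-A)*(1-x^2)"
    unfolding E_def by (simp add: algebra_simps power2_eq_square)
  finally show ?thesis unfolding E_def[symmetric] by (simp add: ac_simps)
qed

lemma S_vd: "((\<lambda>t. Sm a (of_real (tanh (t/2)))) has_vector_derivative
   (1 - Sm a (of_real (tanh (t/2)))^2)/2) (at t)"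
proof -
  have f: "((\<lambda>t. complex_of_real (tanh (t/2))) has_vector_derivative of_real ((1 - tanh (t/2)^2)/2)) (at t)"
    by (rule has_vector_derivative_of_real) (rule derivative_eq_intros refl | simp)+
  have X: "((Sm a \<circ> (\<lambda>t. complex_of_real (tanh (t/2)))) has_vector_derivative
      (of_real ((1 - tanh (t/2)^2)/2) * (4*(1 - \<i> * of_real a)/(\<i> * of_real a * of_real (tanh (t/2)) + \<i> * of_real a - 2)^2))) (at t)"
    by (rule field_vector_diff_chain_at[OF f]) (rule Sm_deriv[OF D_nz])
  have eq: "of_real ((1 - tanh (t/2)^2)/2) * (4*(1 - \<i> * of_real a)/(\<i> * of_real a * of_real (tanh (t/2)) + \<i> * of_real a - 2)^2)
     = (1 - Sm a (of_real (tanh (t/2)))^2)/2"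
    using mob2[OF D_nz[of a "tanh (t/2)"]] unfolding Sm_def by simp
  show ?thesis using X unfolding eq o_def .
qed
definition SS :: "real \<Rightarrow> real \<Rightarrow> complex" where
  "SS a t = Sm a (of_real (tanh (t/2)))"

lemma zH_fun: "zH \<beta> a = (\<lambda>t. wH (\<beta>, a) + 2 * xiH (\<beta>, a) * SS a t)"
  unfolding SS_def using zH_eq by blast

lemma zH_vd: "(zH \<beta> a has_vector_derivative xiH (\<beta>, a) * (1 - SS a t ^ 2)) (at t)"
proof -
  have "((\<lambda>t. wH (\<beta>, a) + 2 * xiH (\<beta>, a) * SS a t) has_vector_derivative
      0 + 2 * xiH (\<beta>, a) * ((1 - SS a t ^ 2)/2)) (at t)"
    unfolding SS_def
    by (intro has_vector_derivative_add has_vector_derivative_const has_vector_derivative_mult_right S_vd)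
  then show ?thesis unfolding zH_fun by simp
qed

lemma zH_dot_eq: "zH_dot \<beta> a t = xiH (\<beta>, a) * (1 - SS a t ^ 2)"
  unfolding zH_dot_def by (rule vector_derivative_at[OF zH_vd])

lemma improper_FTC:
  fixes h G :: "real \<Rightarrow> complex"
  assumes d: "\<And>x. (G has_vector_derivative h x) (at x)"
    and l1: "(G \<longlongrightarrow> L1) at_top" and l0: "(G \<longlongrightarrow> L0) at_bot"
  shows "(h has_integral (L1 - L0)) UNIV"
proof -
  have nc: "\<not> (\<exists>a b. (UNIV::real set) = cbox a b)"
    by (metis bounded_cbox not_bounded_UNIV)
  show ?thesis
  proof (subst has_integral_alt, subst if_not_P[OF nc], intro allI impI)
    fix e :: real assume e: "e > 0"
    have e2: "e/2 > 0" using e by simp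
    obtain B1 where B1: "\<And>x. x \<ge> B1 \<Longrightarrow> norm (G x - L1) < e/2"
      using tendstoD[OF l1 e2] unfolding eventually_at_top_linorder dist_norm by blast
    obtain B0 where B0: "\<And>x. x \<le> B0 \<Longrightarrow> norm (G x - L0) < e/2"
      using tendstoD[OF l0 e2] unfolding eventually_at_bot_linorder dist_norm by blast
    define B where "B = \<bar>B0\<bar> + \<bar>B1\<bar> + 1"
    show "\<exists>B>0. \<forall>a b. ball 0 B \<subseteq> cbox a b \<longrightarrow>
      (\<exists>z. ((\<lambda>x. if x \<in> UNIV then h x else 0) has_integral z) (cbox a b) \<and> norm (z - (L1 - L0)) < e)"
    proof (intro exI[of _ B] conjI allI impI)
      show "B > 0" unfolding B_def by simp
      fix a b :: real assume sub: "ball 0 B \<subseteq> cbox a b"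
      have "B0 \<in> ball 0 B" "B1 \<in> ball 0 B" unfolding B_def by (simp_all add: dist_real_def)
      then have "B0 \<in> cbox a b" "B1 \<in> cbox a b" using sub by (meson subsetD)+
      then have ab: "a \<le> B0" "B1 \<le> b" "a \<le> b" by (simp_all add: cbox_interval)
      have "(h has_integral (G b - G a)) {a..b}"
        by (rule fundamental_theorem_of_calculus[OF \<open>a \<le> b\<close>])
           (rule has_vector_derivative_at_within, rule d)
      moreover have "norm ((G b - G a) - (L1 - L0)) < e"
      proof -
        have eq: "(G b - G a) - (L1 - L0) = (G b - L1) - (G a - L0)" by (simp add: algebra_simps)
        have "norm ((G b - G a) - (L1 - L0)) \<le> norm (G b - L1) + norm (G a - L0)"
          unfolding eq by (rule norm_triangle_ineq4)
        also have "\<dots> < e/2 + e/2" using B1[OF ab(2)] B0[OF ab(1)] by linarith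
        finally show ?thesis by simp
      qed
      ultimately show "\<exists>z. ((\<lambda>x. if x \<in> UNIV then h x else 0) has_integral z) (cbox a b) \<and> norm (z - (L1 - L0)) < e"
        by (intro exI[of _ "G b - G a"]) simp
    qed
  qed
qed
lemma xiH_nz: "xiH (\<beta>, a) \<noteq> 0"
  unfolding xiH_eq using onemia_nz[of a] by simp

lemma Sm_1: "Sm a 1 = 1"
proof -
  have "\<i> * complex_of_real a * 1 + \<i> * complex_of_real a - 2 \<noteq> 0" using D_nz[of a 1] by simp
  then show ?thesis unfolding Sm_def by (simp add: algebra_simps)
qed

lemma Sm_m1: "Sm a (-1) = -1"
  unfolding Sm_def by (simp add: algebra_simps)

lemma Sm_cont: "isCont (Sm a) (of_real x)"
  unfolding Sm_def using D_nz[of a x] by (intro continuous_intros) auto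

lemma SS_top: "(SS a \<longlongrightarrow> 1) at_top"
proof -
  have t: "((\<lambda>t. tanh (t/2)) \<longlongrightarrow> (1::real)) at_top"
    by (rule filterlim_compose[OF tanh_real_at_top]) real_asymp
  have "((\<lambda>t. Sm a (of_real (tanh (t/2)))) \<longlongrightarrow> Sm a (of_real 1)) at_top"
    by (rule isCont_tendsto_compose[OF Sm_cont]) (intro tendsto_of_real t)
  then show ?thesis unfolding SS_def using Sm_1 by simp
qed

lemma SS_bot: "(SS a \<longlongrightarrow> -1) at_bot"
proof -
  have t: "((\<lambda>t. tanh (t/2)) \<longlongrightarrow> (-1::real)) at_bot"
    by (rule filterlim_compose[OF tanh_real_at_bot]) real_asymp
  have "((\<lambda>t. Sm a (of_real (tanh (t/2)))) \<longlongrightarrow> Sm a (of_real (-1))) at_bot"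
    by (rule isCont_tendsto_compose[OF Sm_cont]) (intro tendsto_of_real t)
  then show ?thesis unfolding SS_def using Sm_m1 by simp
qed

lemma alg1: fixes X Q Y :: complex assumes "q \<ge> 1"
  shows "2 * X^q * (Y/2 * (Q * Y^(q-1))) = X^q * Q * Y^q"
proof -
  have e: "Y * Y^(q-1) = Y^q" using assms by (metis Suc_diff_le diff_Suc_1 power_Suc)
  have "2 * X^q * (Y/2 * (Q * Y^(q-1))) = X^q * Q * (Y * Y^(q-1))" by simp
  then show ?thesis unfolding e .
qed

lemma I_H_prim:
  assumes q: "q \<ge> 1"
    and g: "\<And>z. (g has_field_derivative (wH (\<beta>, a) + 2 * xiH (\<beta>, a) * z)^p * (1 - z^2)^(q-1)) (at z)"
  shows "I_H p q (\<beta>, a) = 2 * xiH (\<beta>, a)^q * (g 1 - g (-1))"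
proof -
  define W where "W = wH (\<beta>, a)"
  define X where "X = xiH (\<beta>, a)"
  define G where "G t = 2 * X^q * g (SS a t)" for t
  define h where "h t = zH \<beta> a t ^ p * zH_dot \<beta> a t ^ q" for t
  have hq: "h t = X^q * (W + 2 * X * SS a t)^p * (1 - SS a t ^ 2)^q" for t
    unfolding h_def zH_dot_eq zH_fun W_def X_def by (simp add: power_mult_distrib)
  have dG: "(G has_vector_derivative h t) (at t)" for t
  proof -
    have "((g \<circ> SS a) has_vector_derivative ((1 - SS a t ^ 2)/2 * ((W + 2 * X * SS a t)^p * (1 - SS a t^2)^(q-1)))) (at t)"
      by (rule field_vector_diff_chain_at) (use S_vd[of a t] g in \<open>simp_all add: SS_def[abs_def] W_def X_def\<close>)
    then have "(G has_vector_derivative 2 * X^q * ((1 - SS a t ^ 2)/2 * ((W + 2 * X * SS a t)^p * (1 - SS a t^2)^(q-1)))) (at t)"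
      unfolding G_def[abs_def] o_def by (rule has_vector_derivative_mult_right)
    moreover have "2 * X^q * ((1 - SS a t ^ 2)/2 * ((W + 2 * X * SS a t)^p * (1 - SS a t^2)^(q-1))) = h t"
      unfolding hq by (rule alg1[OF q])
    ultimately show ?thesis by simp
  qed
  have gc: "isCont g z" for z using g DERIV_isCont by blast
  have l1: "(G \<longlongrightarrow> 2 * X^q * g 1) at_top"
    unfolding G_def by (intro tendsto_mult tendsto_const isCont_tendsto_compose[OF gc] SS_top)
  have l0: "(G \<longlongrightarrow> 2 * X^q * g (-1)) at_bot"
    unfolding G_def by (intro tendsto_mult tendsto_const isCont_tendsto_compose[OF gc] SS_bot)
  have "(h has_integral (2 * X^q * g 1 - 2 * X^q * g (-1))) UNIV"
    by (rule improper_FTC[OF dG l1 l0])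
  then have "integral UNIV h = 2 * X^q * g 1 - 2 * X^q * g (-1)" by (rule integral_unique)
  then show ?thesis unfolding I_H_def h_def X_def by (simp add: algebra_simps)
qed
definition mI :: "nat \<Rightarrow> nat \<Rightarrow> real" where
  "mI j n = integral {-1..1} (\<lambda>s::real. s^j * (1 - s^2)^n)"

lemma mI_has: "((\<lambda>s::real. s^j * (1 - s^2)^n) has_integral mI j n) {-1..1}"
  unfolding mI_def by (intro integrable_integral integrable_continuous_real continuous_intros)

lemma I_H_expand:
  assumes q: "q \<ge> 1"
  shows "I_H p q (\<beta>, a) = 2 * xiH (\<beta>, a)^q *
    (\<Sum>j\<le>p. of_nat (p choose j) * wH (\<beta>, a)^(p-j) * (2 * xiH (\<beta>, a))^j * of_real (mI j (q-1)))"
proof -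
  define W where "W = wH (\<beta>, a)"
  define X where "X = xiH (\<beta>, a)"
  define f where "f z = (W + 2 * X * z)^p * (1 - z^2)^(q-1)" for z
  have "f holomorphic_on UNIV" unfolding f_def by (intro holomorphic_intros)
  then obtain g where g0: "\<And>x. x \<in> UNIV \<Longrightarrow> (g has_field_derivative f x) (at x within UNIV)"
    using holomorphic_convex_primitive'[of UNIV f] by auto
  have g: "(g has_field_derivative f z) (at z)" for z using g0[of z] by simp
  have IH: "I_H p q (\<beta>, a) = 2 * X^q * (g 1 - g (-1))"
    unfolding X_def by (rule I_H_prim[OF q]) (use g in \<open>simp add: f_def W_def X_def\<close>)
  have ftc: "((\<lambda>s. f (of_real s)) has_integral (g (of_real 1) - g (of_real (-1)))) {-1..1}"
    by (rule fundamental_theorem_of_calculus[where f = "\<lambda>s. g (of_real s)"]) (simp, rule has_vector_derivative_real_field, rule g)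
  have fexp: "f (of_real s) = (\<Sum>j\<le>p. (of_nat (p choose j) * W^(p-j) * (2 * X)^j) * of_real (s^j * (1 - s^2)^(q-1)))" for s
  proof -
    have eq: "(W + 2 * X * of_real s)^p = (\<Sum>j\<le>p. of_nat (p choose j) * (2 * X * of_real s)^j * W^(p-j))"
      using binomial_ring[of "2 * X * of_real s" W p] by (simp add: add.commute)
    have "f (of_real s) = (\<Sum>j\<le>p. of_nat (p choose j) * (2 * X * of_real s)^j * W^(p-j)) * (1 - (of_real s)^2)^(q-1)"
      unfolding f_def eq ..
    also have "\<dots> = (\<Sum>j\<le>p. of_nat (p choose j) * (2 * X * of_real s)^j * W^(p-j) * (1 - (of_real s)^2)^(q-1))"
      by (rule sum_distrib_right)
    also have "\<dots> = (\<Sum>j\<le>p. (of_nat (p choose j) * W^(p-j) * (2 * X)^j) * of_real (s^j * (1 - s^2)^(q-1)))"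
      by (rule sum.cong) (simp_all add: power_mult_distrib mult_ac)
    finally show ?thesis .
  qed
  have "((\<lambda>s. f (of_real s)) has_integral
     (\<Sum>j\<le>p. (of_nat (p choose j) * W^(p-j) * (2 * X)^j) * of_real (mI j (q-1)))) {-1..1}"
    unfolding fexp
    by (intro has_integral_sum finite_atMost has_integral_mult_right has_integral_of_real mI_has)
  from has_integral_unique[OF ftc this]
  have "g 1 - g (-1) = (\<Sum>j\<le>p. (of_nat (p choose j) * W^(p-j) * (2 * X)^j) * of_real (mI j (q-1)))"
    by simp
  then show ?thesis unfolding IH W_def X_def by simp
qed
lemma mI_odd: assumes "odd j" shows "mI j n = 0"
proof -
  have h: "((\<lambda>s::real. s^j * (1 - s^2)^n) has_integral mI j n) {-1..1}" by (rule mI_has)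
  have r: "((\<lambda>s. (\<lambda>s::real. s^j * (1 - s^2)^n) (-s)) has_integral mI j n) {-1..-(-1)}"
    by (rule has_integral_reflect_real[THEN iffD2, OF h])
  have fe: "(\<lambda>s. (\<lambda>s::real. s^j * (1 - s^2)^n) (-s)) = (\<lambda>s. - (s^j * (1 - s^2)^n))"
    using assms by (auto simp: power_minus_odd)
  have "((\<lambda>s::real. - (s^j * (1 - s^2)^n)) has_integral mI j n) {-1..1}"
    using r unfolding fe by simp
  then have "((\<lambda>s::real. s^j * (1 - s^2)^n) has_integral - mI j n) {-1..1}"
    using has_integral_neg_iff by blast
  from has_integral_unique[OF h this] show ?thesis by simp
qed

lemma mI_0: "mI 0 n \<noteq> 0"
proof
  assume z: "mI 0 n = 0"
  have "((\<lambda>s::real. (1 - s^2)^n) has_integral 0) (cbox (-1) 1)"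
    using mI_has[of 0 n] z by (simp add: cbox_interval)
  then have "(\<lambda>s::real. (1 - s^2)^n) 0 = 0"
  proof (rule has_integral_0_cbox_imp_0[rotated 2])
    show "continuous_on (cbox (-1) 1) (\<lambda>s::real. (1 - s^2)^n)" by (intro continuous_intros)
    show "0 \<le> (1 - x^2)^n" if "x \<in> box (-1) 1" for x :: real
    proof -
      have "-1 < x \<and> x < 1" using that by (simp add: box_real)
      then have "\<bar>x\<bar> \<le> 1" by (simp add: abs_le_iff)
      then have "x^2 \<le> 1" by (simp add: abs_square_le_1)
      then show ?thesis by simp
    qed
    show "box (-1) (1::real) \<noteq> {}" by (simp add: box_real)
    show "(0::real) \<in> cbox (-1) 1" by (simp add: cbox_interval)
  qed
  then show False by simp
qed


lemma span_closed:
  assumes "finite Q" "\<And>m. m \<in> Q \<Longrightarrow> h m \<in> fam_span g P" "finite P"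
  shows "(\<lambda>x. \<Sum>m\<in>Q. c m * h m x) \<in> fam_span g P"
proof -
  have "\<forall>m\<in>Q. \<exists>c. h m = (\<lambda>x. \<Sum>p\<in>P. c p * g p x)"
    using assms(2) unfolding fam_span_def by blast
  then obtain d where d0: "\<forall>m\<in>Q. h m = (\<lambda>x. \<Sum>p\<in>P. d m p * g p x)"
    by (rule bchoice[elim_format]) blast
  then have d: "\<And>m. m \<in> Q \<Longrightarrow> h m = (\<lambda>x. \<Sum>p\<in>P. d m p * g p x)" by blast
  have "(\<lambda>x. \<Sum>m\<in>Q. c m * h m x) = (\<lambda>x. \<Sum>p\<in>P. (\<Sum>m\<in>Q. c m * d m p) * g p x)"
  proof
    fix x
    have "(\<Sum>m\<in>Q. c m * h m x) = (\<Sum>m\<in>Q. c m * (\<Sum>p\<in>P. d m p * g p x))"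
      using d by simp
    also have "\<dots> = (\<Sum>m\<in>Q. \<Sum>p\<in>P. c m * d m p * g p x)"
      by (simp add: sum_distrib_left mult.assoc)
    also have "\<dots> = (\<Sum>p\<in>P. \<Sum>m\<in>Q. c m * d m p * g p x)"
      by (rule sum.swap)
    also have "\<dots> = (\<Sum>p\<in>P. (\<Sum>m\<in>Q. c m * d m p) * g p x)"
      by (simp add: sum_distrib_right)
    finally show "(\<Sum>m\<in>Q. c m * h m x) = (\<Sum>p\<in>P. (\<Sum>m\<in>Q. c m * d m p) * g p x)" .
  qed
  then show ?thesis unfolding fam_span_def by (intro CollectI exI[of _ "\<lambda>p. \<Sum>m\<in>Q. c m * d m p"])
qed

lemma span_mem: "finite P \<Longrightarrow> p \<in> P \<Longrightarrow> g p \<in> fam_span g P"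
proof -
  assume "finite P" "p \<in> P"
  have "g p = (\<lambda>x. \<Sum>m\<in>P. (if m = p then 1 else 0) * g m x)"
  proof
    fix x
    have "(\<Sum>m\<in>P. (if m = p then 1 else 0) * g m x) = (\<Sum>m\<in>P. if m = p then g m x else 0)"
      by (rule sum.cong) auto
    also have "\<dots> = g p x" using \<open>finite P\<close> \<open>p \<in> P\<close> by (simp add: sum.delta')
    finally show "g p x = (\<Sum>m\<in>P. (if m = p then 1 else 0) * g m x)" by simp
  qed
  then show ?thesis unfolding fam_span_def
    by (intro CollectI exI[of _ "\<lambda>m. if m = p then 1 else 0"])
qed

lemma span_sub:
  assumes "finite P" "\<And>p. p \<in> P \<Longrightarrow> f p \<in> fam_span g P"
  shows "fam_span f P \<subseteq> fam_span g P"
proof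
  fix h assume "h \<in> fam_span f P"
  then obtain c where "h = (\<lambda>x. \<Sum>p\<in>P. c p * f p x)" unfolding fam_span_def by blast
  then show "h \<in> fam_span g P" using span_closed[of P f g P c] assms by simp
qed

lemma tri_gen:
  fixes \<rho> :: "nat \<Rightarrow> nat"
  assumes fin: "finite P"
    and f: "\<And>p. p \<in> P \<Longrightarrow> f p = (\<lambda>x. \<Sum>m\<in>P. T p m * g m x)"
    and diag: "\<And>p. p \<in> P \<Longrightarrow> T p p \<noteq> 0"
    and tri: "\<And>p m. p \<in> P \<Longrightarrow> m \<in> P \<Longrightarrow> \<rho> p < \<rho> m \<Longrightarrow> T p m = 0"
    and inj: "inj_on \<rho> P"
  shows "fam_span f P = fam_span g P"
proof
  show "fam_span f P \<subseteq> fam_span g P"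
  proof (rule span_sub[OF fin])
    fix p assume p: "p \<in> P"
    show "f p \<in> fam_span g P" unfolding f[OF p]
      by (rule span_closed[OF fin span_mem[OF fin] fin])
  qed
  have IH: "\<forall>p. p \<in> P \<longrightarrow> \<rho> p = n \<longrightarrow> g p \<in> fam_span f P" for n
  proof (induction n rule: less_induct)
    case (less n)
    show ?case
    proof (intro allI impI)
      fix p assume p: "p \<in> P" and pn: "\<rho> p = n"
      define Q where "Q = {m \<in> P. \<rho> m < \<rho> p}"
      have QP: "Q \<subseteq> P" "p \<notin> Q" unfolding Q_def by auto
      have fQ: "finite Q" using fin QP by (meson finite_subset)
      have split: "(\<Sum>m\<in>P. T p m * g m x) = T p p * g p x + (\<Sum>m\<in>Q. T p m * g m x)" for x
      proof -
        have "(\<Sum>m\<in>P. T p m * g m x) = (\<Sum>m\<in>P. if m \<in> insert p Q then T p m * g m x else 0)"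
        proof (rule sum.cong[OF refl])
          fix m assume m: "m \<in> P"
          show "T p m * g m x = (if m \<in> insert p Q then T p m * g m x else 0)"
          proof (cases "m \<in> insert p Q")
            case False
            then have "m \<noteq> p" "\<not> \<rho> m < \<rho> p" using m unfolding Q_def by auto
            moreover have "\<rho> m \<noteq> \<rho> p" using inj m p \<open>m \<noteq> p\<close> by (meson inj_onD)
            ultimately have "\<rho> p < \<rho> m" by simp
            then show ?thesis using tri[OF p m] by simp
          qed simp
        qed
        also have "\<dots> = (\<Sum>m\<in>P \<inter> insert p Q. T p m * g m x)"
          by (rule sum.inter_restrict[symmetric, OF fin])
        also have "P \<inter> insert p Q = insert p Q" using QP p by auto
        also have "(\<Sum>m\<in>insert p Q. T p m * g m x) = T p p * g p x + (\<Sum>m\<in>Q. T p m * g m x)"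
          using fQ QP by simp
        finally show ?thesis .
      qed
      define h' where "h' m = (if m = p then f p else g m)" for m
      define c where "c m = (if m = p then 1 / T p p else - T p m / T p p)" for m
      have gp: "g p = (\<lambda>x. \<Sum>m\<in>insert p Q. c m * h' m x)"
      proof
        fix x
        have "f p x = T p p * g p x + (\<Sum>m\<in>Q. T p m * g m x)" using f[OF p] split by simp
        then have "g p x = (f p x - (\<Sum>m\<in>Q. T p m * g m x)) / T p p"
          using diag[OF p] by (simp add: field_simps)
        also have "\<dots> = 1 / T p p * f p x + (\<Sum>m\<in>Q. - T p m / T p p * g m x)"
        proof -
          have s: "(\<Sum>m\<in>Q. - T p m / T p p * g m x) = (- 1 / T p p) * (\<Sum>m\<in>Q. T p m * g m x)"
            unfolding sum_distrib_left by (rule sum.cong[OF refl]) simp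
          show ?thesis unfolding s by (simp add: diff_divide_distrib)
        qed
        also have "(\<Sum>m\<in>Q. - T p m / T p p * g m x) = (\<Sum>m\<in>Q. c m * h' m x)"
          by (rule sum.cong[OF refl]) (use QP in \<open>auto simp: c_def h'_def\<close>)
        also have "1 / T p p * f p x = c p * h' p x" by (simp add: c_def h'_def)
        also have "c p * h' p x + (\<Sum>m\<in>Q. c m * h' m x) = (\<Sum>m\<in>insert p Q. c m * h' m x)"
          by (rule sum.insert[OF fQ QP(2), symmetric])
        finally show "g p x = (\<Sum>m\<in>insert p Q. c m * h' m x)" .
      qed
      have "h' m \<in> fam_span f P" if "m \<in> insert p Q" for m
      proof (cases "m = p")
        case True then show ?thesis using span_mem[OF fin p] by (simp add: h'_def)
      next
        case False
        then have m: "m \<in> P" "\<rho> m < \<rho> p" using that unfolding Q_def by auto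
        show ?thesis using less[rule_format, OF _ m(1) refl] m(2) pn False by (simp add: h'_def)
      qed
      then have "(\<lambda>x. \<Sum>m\<in>insert p Q. c m * h' m x) \<in> fam_span f P"
        using span_closed[of "insert p Q" h' f P c] fQ fin by blast
      then show "g p \<in> fam_span f P" unfolding gp .
    qed
  qed
  show "fam_span g P \<subseteq> fam_span f P"
    by (rule span_sub[OF fin]) (use IH in blast)
qed

lemma even_sum:
  fixes c :: "nat \<Rightarrow> 'a::comm_monoid_add"
  assumes "\<And>j. odd j \<Longrightarrow> c j = 0"
  shows "(\<Sum>j\<le>N. c j) = (\<Sum>k\<le>N div 2. c (2*k))"
proof (induction N)
  case 0 then show ?case by simp
next
  case (Suc N)
  show ?case
  proof (cases "even (Suc N)")
    case True
    then have e: "Suc N div 2 = Suc (N div 2)" "Suc (Suc (2 * (N div 2))) = Suc N"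
      by presburger+
    show ?thesis using Suc.IH unfolding e(1) by (simp add: e(2))
  next
    case False
    then have e: "Suc N div 2 = N div 2" by presburger
    show ?thesis using Suc.IH assms[OF False] unfolding e by simp
  qed
qed

lemma shift_sum:
  fixes a b :: nat
  assumes "a \<le> b"
  shows "(\<Sum>k\<le>b-a. h (a+k)) = (\<Sum>m\<in>{a..b}. h m)"
proof -
  have "{a..b} = {0+a..(b-a)+a}" using assms by simp
  then have "(\<Sum>m\<in>{a..b}. h m) = (\<Sum>k\<in>{0..b-a}. h (k+a))"
    by (simp only: sum.shift_bounds_cl_nat_ivl)
  then show ?thesis by (simp add: atLeast0AtMost add.commute)
qed

lemma restrict_sum:
  assumes "finite P" "Q \<subseteq> P"
  shows "(\<Sum>m\<in>Q. h m) = (\<Sum>m\<in>P. if m \<in> Q then h m else 0)"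
proof -
  have "(\<Sum>m\<in>P. if m \<in> Q then h m else 0) = (\<Sum>m\<in>P \<inter> Q. h m)"
    by (rule sum.inter_restrict[symmetric, OF assms(1)])
  also have "P \<inter> Q = Q" using assms(2) by auto
  finally show ?thesis by simp
qed

lemma cheb_step:
  assumes "\<exists>d. (\<forall>x. chebU (Suc n) x = (\<Sum>k\<le>Suc n div 2. d k * x^(Suc n - 2*k))) \<and> d 0 = 2^Suc n"
    and "\<exists>d. (\<forall>x. chebU n x = (\<Sum>k\<le>n div 2. d k * x^(n - 2*k))) \<and> d 0 = 2^n"
  shows "\<exists>d. (\<forall>x. chebU (Suc (Suc n)) x = (\<Sum>k\<le>Suc (Suc n) div 2. d k * x^(Suc (Suc n) - 2*k))) \<and> d 0 = 2^Suc (Suc n)"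
proof -
  obtain d1 where d1: "\<And>x. chebU (Suc n) x = (\<Sum>k\<le>Suc n div 2. d1 k * x^(Suc n - 2*k))" "d1 0 = 2^Suc n"
    using assms(1) by blast
  obtain d0 where d0: "\<And>x. chebU n x = (\<Sum>k\<le>n div 2. d0 k * x^(n - 2*k))" "d0 0 = 2^n"
    using assms(2) by blast
  define e where "e k = (if k \<le> Suc n div 2 then 2 * d1 k else 0) - (if k = 0 then 0 else d0 (k-1))" for k
  have M: "Suc (Suc n) div 2 = Suc (n div 2)" by simp
  have le: "Suc n div 2 \<le> Suc (n div 2)" by simp
  have "chebU (Suc (Suc n)) x = (\<Sum>k\<le>Suc (Suc n) div 2. e k * x^(Suc (Suc n) - 2*k))" for x
  proof -
    have A: "(\<Sum>k\<le>Suc (n div 2). (if k \<le> Suc n div 2 then 2 * d1 k else 0) * x^(Suc (Suc n) - 2*k))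
        = 2 * x * chebU (Suc n) x"
    proof -
      have "(\<Sum>k\<le>Suc (n div 2). (if k \<le> Suc n div 2 then 2 * d1 k else 0) * x^(Suc (Suc n) - 2*k))
          = (\<Sum>k\<le>Suc (n div 2). if k \<in> {..Suc n div 2} then 2 * d1 k * x^(Suc (Suc n) - 2*k) else 0)"
        by (rule sum.cong) auto
      also have "\<dots> = (\<Sum>k\<le>Suc n div 2. 2 * d1 k * x^(Suc (Suc n) - 2*k))"
        by (rule restrict_sum[symmetric]) (use le in auto)
      also have "\<dots> = (\<Sum>k\<le>Suc n div 2. 2 * x * (d1 k * x^(Suc n - 2*k)))"
      proof (rule sum.cong[OF refl])
        fix k assume "k \<in> {..Suc n div 2}"
        then have "2 * k \<le> Suc n" by auto
        then have "Suc (Suc n) - 2*k = Suc (Suc n - 2*k)" by simp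
        then show "2 * d1 k * x^(Suc (Suc n) - 2*k) = 2 * x * (d1 k * x^(Suc n - 2*k))" by simp
      qed
      also have "\<dots> = 2 * x * chebU (Suc n) x" by (simp add: d1(1) sum_distrib_left)
      finally show ?thesis .
    qed
    have B: "(\<Sum>k\<le>Suc (n div 2). (if k = 0 then 0 else d0 (k-1)) * x^(Suc (Suc n) - 2*k)) = chebU n x"
      by (subst sum.atMost_Suc_shift) (simp add: d0(1) del: sum.atMost_Suc)
    have "(\<Sum>k\<le>Suc (Suc n) div 2. e k * x^(Suc (Suc n) - 2*k))
       = (\<Sum>k\<le>Suc (n div 2). (if k \<le> Suc n div 2 then 2 * d1 k else 0) * x^(Suc (Suc n) - 2*k))
         - (\<Sum>k\<le>Suc (n div 2). (if k = 0 then 0 else d0 (k-1)) * x^(Suc (Suc n) - 2*k))"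
      unfolding M e_def by (simp add: left_diff_distrib sum_subtractf)
    then show ?thesis unfolding A B by simp
  qed
  moreover have "e 0 = 2^Suc (Suc n)" unfolding e_def using d1(2) by simp
  ultimately show ?thesis by blast
qed
lemma cheb_expand: "\<exists>d. (\<forall>x. chebU n x = (\<Sum>k\<le>n div 2. d k * x^(n - 2*k))) \<and> d 0 = 2^n"
proof (induction n rule: less_induct)
  case (less n')
  show ?case
  proof (cases n')
    case 0 then show ?thesis by (intro exI[of _ "\<lambda>k. 1"]) simp
  next
    case (Suc n1)
    show ?thesis
    proof (cases n1)
      case 0 then show ?thesis using Suc by (intro exI[of _ "\<lambda>k. 2"]) simp
    next
      case (Suc n)
      have n': "n' = Suc (Suc n)" using Suc \<open>n' = Suc n1\<close> by simp
      show ?thesis unfolding n' by (rule cheb_step) (use less.IH[of "Suc n"] less.IH[of n] n' in auto)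
    qed
  qed
qed



definition T2 :: "nat \<Rightarrow> nat \<Rightarrow> nat \<Rightarrow> complex" where
  "T2 r p m = (if p \<le> m then 2 * of_nat ((r - 2*p) choose (2*(m-p))) * 2^(2*(m-p)) * of_real (mI (2*(m-p)) (2*p-1)) else 0)"

lemma rel23:
  assumes p: "1 \<le> p" "p \<le> r div 2"
  shows "I_H (r - 2*p) (2*p) = (\<lambda>x. \<Sum>m\<in>{1..r div 2}. T2 r p m * (xiH x^(2*m) * wH x^(r-2*m)))"
proof
  fix x :: "real \<times> real"
  obtain \<beta> a where x: "x = (\<beta>, a)" by (cases x)
  define W where "W = wH (\<beta>, a)"
  define X where "X = xiH (\<beta>, a)"
  define R where "R = r div 2"
  define c where "c j = 2 * X^(2*p) * (of_nat ((r-2*p) choose j) * W^(r-2*p-j) * (2 * X)^j * of_real (mI j (2*p-1)))" for j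
  define h where "h m = T2 r p m * (X^(2*m) * W^(r-2*m))" for m
  have q: "2*p \<ge> 1" using p by simp
  have "I_H (r - 2*p) (2*p) x = (\<Sum>j\<le>r-2*p. c j)"
    unfolding x I_H_expand[OF q] c_def W_def X_def by (simp add: sum_distrib_left)
  also have "\<dots> = (\<Sum>k\<le>(r-2*p) div 2. c (2*k))"
    by (rule even_sum) (simp add: c_def mI_odd)
  also have "(r-2*p) div 2 = R - p" unfolding R_def by (simp add: div_mult_self1 flip: diff_mult_distrib2 )
  also have "(\<Sum>k\<le>R-p. c (2*k)) = (\<Sum>k\<le>R-p. h (p+k))"
  proof (rule sum.cong[OF refl])
    fix k assume "k \<in> {..R-p}"
    have e1: "r - 2*p - 2*k = r - 2*(p+k)" by simp
    have e2: "X^(2*p) * X^(2*k) = X^(2*(p+k))" by (simp add: power_add[symmetric] distrib_left)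
    show "c (2*k) = h (p+k)"
      unfolding c_def h_def T2_def e1 using e2
      by (simp add: power_mult_distrib mult_ac)
  qed
  also have "\<dots> = (\<Sum>m\<in>{p..R}. h m)" by (rule shift_sum) (use p in \<open>simp add: R_def\<close>)
  also have "\<dots> = (\<Sum>m\<in>{1..R}. if m \<in> {p..R} then h m else 0)"
    by (rule restrict_sum) (use p in auto)
  also have "\<dots> = (\<Sum>m\<in>{1..R}. h m)"
    by (rule sum.cong[OF refl]) (auto simp: h_def T2_def)
  finally show "I_H (r - 2*p) (2*p) x = (\<Sum>m\<in>{1..r div 2}. T2 r p m * (xiH x^(2*m) * wH x^(r-2*m)))"
    unfolding h_def R_def x W_def X_def .
qed

definition T4 :: "nat \<Rightarrow> nat \<Rightarrow> complex" where
  "T4 p m = (if m \<le> p then of_nat ((p-1) choose (m-1)) * (-4)^(m-1) else 0)"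

lemma alg43:
  fixes X W :: complex
  assumes p: "1 \<le> p" "p \<le> r div 2"
  shows "X^2 * W^(r-2*p) * (W^2 - 4*X^2)^(p-1) = (\<Sum>m\<in>{1..r div 2}. T4 p m * (X^(2*m) * W^(r-2*m)))"
proof -
  define R where "R = r div 2"
  define h where "h m = T4 p m * (X^(2*m) * W^(r-2*m))" for m
  have "(W^2 - 4*X^2)^(p-1) = (\<Sum>k\<le>p-1. of_nat ((p-1) choose k) * (-4*X^2)^k * (W^2)^(p-1-k))"
    using binomial_ring[of "-4*X^2" "W^2" "p-1"] by simp
  then have "X^2 * W^(r-2*p) * (W^2 - 4*X^2)^(p-1) = (\<Sum>k\<le>p-1. X^2 * W^(r-2*p) * (of_nat ((p-1) choose k) * (-4*X^2)^k * (W^2)^(p-1-k)))"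
    by (simp add: sum_distrib_left)
  also have "\<dots> = (\<Sum>k\<le>p-1. h (1+k))"
  proof (rule sum.cong[OF refl])
    fix k assume k: "k \<in> {..p-1}"
    have e1: "r - 2*p + 2*(p-1-k) = r - 2*(1+k)" using k p by auto
    have "W^(r-2*p) * (W^2)^(p-1-k) = W^(r-2*p + 2*(p-1-k))" by (simp add: power_add power_mult)
    then have e2: "W^(r-2*p) * (W^2)^(p-1-k) = W^(r - 2*(1+k))" unfolding e1 .
    have e3: "X^2 * (X^2)^k = X^(2*(1+k))" by (simp add: power_mult[symmetric] power_add[symmetric])
    have m4: "(-4*X^2)^k = (-4)^k * (X^2)^k" by (simp only: power_mult_distrib)
    have "X^2 * W^(r-2*p) * (of_nat ((p-1) choose k) * (-4*X^2)^k * (W^2)^(p-1-k))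
        = of_nat ((p-1) choose k) * (-4)^k * ((X^2 * (X^2)^k) * (W^(r-2*p) * (W^2)^(p-1-k)))"
      unfolding m4 by (simp only: mult_ac)
    also have "\<dots> = h (1+k)" unfolding e2 e3 h_def T4_def using k p by auto
    finally show "X^2 * W^(r-2*p) * (of_nat ((p-1) choose k) * (-4*X^2)^k * (W^2)^(p-1-k)) = h (1+k)" .
  qed
  also have "\<dots> = (\<Sum>m\<in>{1..p}. h m)" using shift_sum[of 1 p h] p by simp
  also have "\<dots> = (\<Sum>m\<in>{1..R}. if m \<in> {1..p} then h m else 0)"
    by (rule restrict_sum) (use p in \<open>auto simp: R_def\<close>)
  also have "\<dots> = (\<Sum>m\<in>{1..R}. h m)"
    by (rule sum.cong[OF refl]) (auto simp: h_def T4_def)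
  finally show ?thesis unfolding h_def R_def .
qed

lemma muH_sq: "(muH a)^2 * (1 + a^2) = 1"
  unfolding muH_def by (simp add: power_divide) (smt (verit) zero_le_power2)

lemma G4_val:
  assumes p: "1 \<le> m" "2*m \<le> r"
  shows "xiH (\<beta>, a)^2 * wH (\<beta>, a)^(r-2*m) * (wH (\<beta>, a)^2 - 4 * xiH (\<beta>, a)^2)^(m-1)
    = -(1/4) * of_real ((muH a)^2) * of_real ((- (a * muH a))^(r-2*m)) * cis (omegaH \<beta> a)^r"
proof -
  define E where "E = cis (omegaH \<beta> a)"
  define u where "u = muH a"
  have W: "wH (\<beta>, a) = of_real (- (a * u)) * E" unfolding wH_def E_def u_def by simp
  have X: "xiH (\<beta>, a) = (\<i>/2) * of_real u * E" unfolding xiH_def E_def u_def by simp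
  have X2: "xiH (\<beta>, a)^2 = -(1/4) * of_real (u^2) * E^2"
    unfolding X by (simp add: power_mult_distrib power2_eq_square mult_ac complex_i_mult_minus)
  have uu: "u^2 * (1 + a^2) = 1" unfolding u_def by (rule muH_sq)
  have "wH (\<beta>, a)^2 - 4 * xiH (\<beta>, a)^2 = of_real (u^2 * (1 + a^2)) * E^2"
    unfolding X2 W by (simp add: power_mult_distrib algebra_simps power2_eq_square)
  then have D: "wH (\<beta>, a)^2 - 4 * xiH (\<beta>, a)^2 = E^2" using uu by simp
  have ex: "2 + (r - 2*m) + 2*(m-1) = r" using p by auto
  have "xiH (\<beta>, a)^2 * wH (\<beta>, a)^(r-2*m) * (wH (\<beta>, a)^2 - 4 * xiH (\<beta>, a)^2)^(m-1)
      = xiH (\<beta>, a)^2 * wH (\<beta>, a)^(r-2*m) * (E^2)^(m-1)" unfolding D ..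
  also have "\<dots> = -(1/4) * of_real (u^2) * of_real ((- (a * u))^(r-2*m)) * (E^2 * E^(r-2*m) * E^(2*(m-1)))"
  proof -
    define c where "c = (of_real (- (a * u)) :: complex)"
    have cc: "of_real ((- (a * u))^(r-2*m)) = c^(r-2*m)" unfolding c_def by (simp only: of_real_power)
    show ?thesis unfolding X2 W cc c_def[symmetric] by (simp add: power_mult_distrib power_mult[symmetric] mult_ac)
  qed
  also have "E^2 * E^(r-2*m) * E^(2*(m-1)) = E^r"
    unfolding power_add[symmetric] ex ..
  finally show ?thesis unfolding E_def u_def .
qed
definition Dc :: "nat \<Rightarrow> nat \<Rightarrow> real" where
  "Dc n = (SOME d. (\<forall>x. chebU n x = (\<Sum>k\<le>n div 2. d k * x^(n - 2*k))) \<and> d 0 = 2^n)"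

lemma Dc0: "(\<forall>x. chebU n x = (\<Sum>k\<le>n div 2. Dc n k * x^(n - 2*k))) \<and> Dc n 0 = 2^n"
  unfolding Dc_def by (rule someI_ex[OF cheb_expand])

lemma Dc: "chebU n x = (\<Sum>k\<le>n div 2. Dc n k * x^(n - 2*k))" "Dc n 0 = 2^n"
  using Dc0[of n] by blast+

definition t1 :: "nat \<Rightarrow> nat \<Rightarrow> nat \<Rightarrow> real" where
  "t1 r p m = (if p \<le> m then -4 * (-1)^r * Dc (r - 2*p) (m-p) / pi else 0)"

definition T1 :: "nat \<Rightarrow> nat \<Rightarrow> nat \<Rightarrow> complex" where
  "T1 r p m = of_real (t1 r p m)"

lemma sign_lemma: assumes "even (r + e)" shows "(-1)^r * (-y::real)^e = y^e"
proof -
  have "(-1::real)^r * (-1)^e = (-1)^(r+e)" by (rule power_add[symmetric])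
  also have "\<dots> = 1" using assms by simp
  finally have "(-1::real)^r * (-1)^e = 1" .
  have pm: "(-y)^e = (-1)^e * y^e" by (rule power_minus)
  have "(-1)^r * (-y)^e = ((-1::real)^r * (-1)^e) * y^e" unfolding pm by (simp only: mult.assoc)
  then show ?thesis unfolding \<open>(-1::real)^r * (-1)^e = 1\<close> by (simp only: mult_1)
qed

lemma real14:
  assumes p: "1 \<le> p" "p \<le> r div 2"
  shows "chebU (r - 2*p) y / pi = (\<Sum>m\<in>{1..r div 2}. t1 r p m * (-(1/4)) * (-y)^(r-2*m))"
proof -
  define R where "R = r div 2"
  define hh where "hh m = t1 r p m * (-(1/4)) * (-y)^(r-2*m)" for m
  have "chebU (r - 2*p) y / pi = (\<Sum>k\<le>(r-2*p) div 2. Dc (r-2*p) k * y^(r-2*p-2*k) / pi)"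
    unfolding Dc(1) by (simp add: sum_divide_distrib)
  also have "(r-2*p) div 2 = R - p" unfolding R_def by (simp add: div_mult_self1 flip: diff_mult_distrib2)
  also have "(\<Sum>k\<le>R-p. Dc (r-2*p) k * y^(r-2*p-2*k) / pi) = (\<Sum>k\<le>R-p. hh (p+k))"
  proof (rule sum.cong[OF refl])
    fix k assume k: "k \<in> {..R-p}"
    have e1: "r - 2*(p+k) = r-2*p-2*k" by simp
    have k2: "k \<le> r div 2 - p" using k unfolding R_def by simp
    have "2 * (r div 2) \<le> r" by simp
    then have le: "2*p + 2*k \<le> r" using k2 p by linarith
    then have "r + (r-2*p-2*k) = 2*(r - p - k)" by simp
    then have ev: "even (r + (r-2*p-2*k))" by simp
    have "hh (p+k) = Dc (r-2*p) k / pi * ((-1)^r * (-y)^(r-2*p-2*k))"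
      unfolding hh_def t1_def e1 by simp
    also have "\<dots> = Dc (r-2*p) k * y^(r-2*p-2*k) / pi" unfolding sign_lemma[OF ev] by simp
    finally show "Dc (r-2*p) k * y^(r-2*p-2*k) / pi = hh (p+k)" by simp
  qed
  also have "\<dots> = (\<Sum>m\<in>{p..R}. hh m)" by (rule shift_sum) (use p in \<open>simp add: R_def\<close>)
  also have "\<dots> = (\<Sum>m\<in>{1..R}. if m \<in> {p..R} then hh m else 0)"
    by (rule restrict_sum) (use p in auto)
  also have "\<dots> = (\<Sum>m\<in>{1..R}. hh m)"
    by (rule sum.cong[OF refl]) (auto simp: hh_def t1_def)
  finally show ?thesis unfolding hh_def R_def .
qed

lemma alg14: fixes t v w :: real and Er :: complex
  shows "of_real t * (-(1/4) * of_real v * of_real w * Er) = of_real v * Er * of_real (t * (-(1/4)) * w)"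
  by (simp add: mult_ac)

lemma rel14:
  assumes p: "1 \<le> p" "p \<le> r div 2"
  shows "psiH (r - 2*p) (- int p) = (\<lambda>x. \<Sum>m\<in>{1..r div 2}. T1 r p m * (xiH x^2 * wH x^(r-2*m) * (wH x^2 - 4 * xiH x^2)^(m-1)))"
proof
  fix x :: "real \<times> real"
  obtain \<beta> a where x: "x = (\<beta>, a)" by (cases x)
  define u where "u = muH a"
  define E where "E = cis (omegaH \<beta> a)"
  have ang: "(of_nat (r - 2*p) - 2 * of_int (- int p)) * omegaH \<beta> a = real r * omegaH \<beta> a"
    using p by (simp add: of_nat_diff)
  have aa: "a / sqrt (1 + a^2) = a * u" unfolding u_def muH_def by simp
  have c: "cis ((of_nat (r - 2*p) - 2 * of_int (- int p)) * omegaH \<beta> a) = E^r"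
  proof -
    have "E^r = cis (real r * omegaH \<beta> a)" unfolding E_def by (rule Complex.DeMoivre)
    then show ?thesis unfolding ang by simp
  qed
  have L0: "psiH (r - 2*p) (- int p) x = of_real ((muH a)^2) * cis ((of_nat (r - 2*p) - 2 * of_int (- int p)) * omegaH \<beta> a)
     * of_real (chebU (r - 2*p) (a / sqrt (1 + a^2)) / pi)"
    unfolding x psiH_def pH_def by simp
  have L: "psiH (r - 2*p) (- int p) x = of_real (u^2) * E^r * of_real (chebU (r - 2*p) (a*u) / pi)"
    unfolding L0 c aa u_def ..
  have "(\<Sum>m\<in>{1..r div 2}. T1 r p m * (xiH x^2 * wH x^(r-2*m) * (wH x^2 - 4 * xiH x^2)^(m-1)))
      = (\<Sum>m\<in>{1..r div 2}. of_real (u^2) * E^r * of_real (t1 r p m * (-(1/4)) * (-(a*u))^(r-2*m)))"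
  proof (rule sum.cong[OF refl])
    fix m assume m: "m \<in> {1..r div 2}"
    then have m1: "1 \<le> m" "2*m \<le> r" by auto
    show "T1 r p m * (xiH x^2 * wH x^(r-2*m) * (wH x^2 - 4 * xiH x^2)^(m-1))
      = of_real (u^2) * E^r * of_real (t1 r p m * (-(1/4)) * (-(a*u))^(r-2*m))"
      unfolding x G4_val[OF m1] T1_def u_def E_def by (rule alg14)
  qed
  also have "\<dots> = of_real (u^2) * E^r * of_real (\<Sum>m\<in>{1..r div 2}. t1 r p m * (-(1/4)) * (-(a*u))^(r-2*m))"
    by (simp add: sum_distrib_left)
  also have "\<dots> = psiH (r - 2*p) (- int p) x" unfolding L real14[OF p, symmetric] ..
  finally show "psiH (r - 2*p) (- int p) x = (\<Sum>m\<in>{1..r div 2}. T1 r p m * (xiH x^2 * wH x^(r-2*m) * (wH x^2 - 4 * xiH x^2)^(m-1)))" by simp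
qed
theorem lemma4p9:
  fixes r :: nat
  assumes "r \<ge> 2"
  defines "P \<equiv> {1 .. r div 2}"
  shows "fam_span (\<lambda>p. psiH (r - 2*p) (- int p)) P = fam_span (\<lambda>p. I_H (r - 2*p) (2*p)) P
       \<and> fam_span (\<lambda>p. I_H (r - 2*p) (2*p)) P = fam_span (\<lambda>p x. xiH x ^ (2*p) * wH x ^ (r - 2*p)) P
       \<and> fam_span (\<lambda>p x. xiH x ^ (2*p) * wH x ^ (r - 2*p)) P
         = fam_span (\<lambda>p x. xiH x ^ 2 * wH x ^ (r - 2*p) * (wH x ^ 2 - 4 * xiH x ^ 2) ^ (p - 1)) P"
proof -
  define R where "R = r div 2"
  have fin: "finite P" unfolding P_def by simp
  have Pm: "1 \<le> p" "p \<le> r div 2" if "p \<in> P" for p using that unfolding P_def by auto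
  have injR: "inj_on (\<lambda>m. R - m) P" unfolding P_def R_def inj_on_def by auto
  have injI: "inj_on (\<lambda>m. m) P" by simp
  have S14: "fam_span (\<lambda>p. psiH (r - 2*p) (- int p)) P
     = fam_span (\<lambda>p x. xiH x ^ 2 * wH x ^ (r - 2*p) * (wH x ^ 2 - 4 * xiH x ^ 2) ^ (p - 1)) P"
  proof (rule tri_gen[OF fin _ _ _ injR, where T = "T1 r"])
    fix p assume p: "p \<in> P"
    show "psiH (r - 2*p) (- int p) = (\<lambda>x. \<Sum>m\<in>P. T1 r p m * (xiH x ^ 2 * wH x ^ (r - 2*m) * (wH x ^ 2 - 4 * xiH x ^ 2) ^ (m - 1)))"
      unfolding P_def by (rule rel14[OF Pm[OF p]])
    show "T1 r p p \<noteq> 0" unfolding T1_def t1_def using Dc(2)[of "r - 2*p"] by simp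
  next
    fix p m assume "p \<in> P" "m \<in> P" "R - p < R - m"
    then have "m < p" by simp
    then show "T1 r p m = 0" unfolding T1_def t1_def by simp
  qed
  have S23: "fam_span (\<lambda>p. I_H (r - 2*p) (2*p)) P = fam_span (\<lambda>p x. xiH x ^ (2*p) * wH x ^ (r - 2*p)) P"
  proof (rule tri_gen[OF fin _ _ _ injR, where T = "T2 r"])
    fix p assume p: "p \<in> P"
    show "I_H (r - 2*p) (2*p) = (\<lambda>x. \<Sum>m\<in>P. T2 r p m * (xiH x ^ (2*m) * wH x ^ (r - 2*m)))"
      unfolding P_def by (rule rel23[OF Pm[OF p]])
    show "T2 r p p \<noteq> 0" unfolding T2_def using mI_0[of "2*p-1"] by simp
  next
    fix p m assume "p \<in> P" "m \<in> P" "R - p < R - m"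
    then have "m < p" by simp
    then show "T2 r p m = 0" unfolding T2_def by simp
  qed
  have S43: "fam_span (\<lambda>p x. xiH x ^ 2 * wH x ^ (r - 2*p) * (wH x ^ 2 - 4 * xiH x ^ 2) ^ (p - 1)) P
      = fam_span (\<lambda>p x. xiH x ^ (2*p) * wH x ^ (r - 2*p)) P"
  proof (rule tri_gen[OF fin _ _ _ injI, where T = "T4"])
    fix p assume p: "p \<in> P"
    show "(\<lambda>x. xiH x ^ 2 * wH x ^ (r - 2*p) * (wH x ^ 2 - 4 * xiH x ^ 2) ^ (p - 1))
       = (\<lambda>x. \<Sum>m\<in>P. T4 p m * (xiH x ^ (2*m) * wH x ^ (r - 2*m)))"
      unfolding P_def by (rule ext, rule alg43[OF Pm[OF p]])
    show "T4 p p \<noteq> 0" unfolding T4_def by simp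
  next
    fix p m assume "p \<in> P" "m \<in> P" "p < m"
    then show "T4 p m = 0" unfolding T4_def by simp
  qed
  show ?thesis using S14 S23 S43 by simp
qed
end
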